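(* For every $\epsilon>0$ there exists a constant $c_{\epsilon,1}>0$ (depending on $\epsilon$ but not on $m$) such that for every $n\ge1$, \[P\left(\max_{t\in[-1,1]}|D_n(t)-G_m(t)|>\epsilon\right)\le c_{\epsilon,1}\exp\left(-\frac{\epsilon^2}{2}n\right).\] In particular, $\lim_{n\to\infty}\max_{t\in[-1,1]}|D_n(t)-G_m(t)|=0$ $P$-a.s.
   Context: Fix $m>1/2$. Let $c_m:=\left(\int_{\mathbb R}(1+x^2)^{-m}dx\right)^{-1}$ and $\nu_m(dx):=c_m(1+x^2)^{-m}dx$. Let $(X_n)_{n\ge1}$ be i.i.d. random variables on $(\Omega,\mathcal F,P)$ with law $\nu_m$. Let $D(x,t):=\dfrac{x-t}{1+(x-t)^2}$ for $x,t\in\mathbb R$, $D_n(t):=\frac1n\sum_{i=1}^nD(X_i,t)$, and $G_m(t):=\int_{\mathbb R}D(x,t)\,\nu_m(dx)$. *)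

theory Defs
  imports "HOL-Probability.Probability"
begin

definition c_m :: "real \<Rightarrow> real" where
  "c_m m = 1 / (LBINT x. (1 + x\<^sup>2) powr (-m))"

definition nu_m :: "real \<Rightarrow> real measure" where
  "nu_m m = density lborel (\<lambda>x. ennreal (c_m m * (1 + x\<^sup>2) powr (-m)))"

definition D :: "real \<Rightarrow> real \<Rightarrow> real" where
  "D x t = (x - t) / (1 + (x - t)\<^sup>2)"

definition D_n :: "(nat \<Rightarrow> 'a \<Rightarrow> real) \<Rightarrow> nat \<Rightarrow> real \<Rightarrow> 'a \<Rightarrow> real" where
  "D_n X n t \<omega> = (1 / real n) * (\<Sum>i=1..n. D (X i \<omega>) t)"

definition G_m :: "real \<Rightarrow> real \<Rightarrow> real" where
  "G_m m t = (\<integral>x. D x t \<partial>nu_m m)"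

definition iid_nu :: "'a measure \<Rightarrow> real \<Rightarrow> (nat \<Rightarrow> 'a \<Rightarrow> real) \<Rightarrow> bool" where
  "iid_nu M m X \<longleftrightarrow> prob_space M \<and>
     (\<forall>i\<ge>1. X i \<in> borel_measurable M \<and> distr M borel (X i) = nu_m m) \<and>
     prob_space.indep_vars M (\<lambda>_. borel) X {1..}"

end

theory Submission
  imports Defs
begin

lemma D_meas[measurable]: "(\<lambda>x. D x t) \<in> borel_measurable borel"
  unfolding D_def by measurable

lemma D_bound: "\<bar>D x t\<bar> \<le> 1/2"
proof -
  have "2 * \<bar>x - t\<bar> \<le> 1 + (x-t)\<^sup>2"
  proof -
    have "0 \<le> (\<bar>x - t\<bar> - 1)\<^sup>2" by simp
    also have "\<dots> = (x-t)\<^sup>2 - 2 * \<bar>x - t\<bar> + 1" by (simp add: power2_diff)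
    finally show ?thesis by linarith
  qed
  moreover have "0 < 1 + (x-t)\<^sup>2" by (simp add: add_pos_nonneg)
  ultimately show ?thesis unfolding D_def by (simp add: abs_divide divide_le_eq)
qed

lemma D_le: "D x t \<le> 1/2" and D_ge: "-(1/2) \<le> D x t" and D_bound': "\<bar>D x t\<bar> * 2 \<le> 1"
  using D_bound[of x t] by (auto simp: abs_le_iff)

lemma D_in: "D x t \<in> {-1/2..1/2}"
  using D_bound[of x t] by (auto simp: abs_le_iff)

lemma D_lip: "\<bar>D x t - D x s\<bar> \<le> \<bar>t - s\<bar>"
proof -
  define u where "u = x - t"
  define v where "v = x - s"
  have pu: "1 + u\<^sup>2 > 0" and pv: "1 + v\<^sup>2 > 0" by (auto simp: add_pos_nonneg)
  have eq: "D x t - D x s = (u - v) * (1 - u * v) / ((1+u\<^sup>2) * (1+v\<^sup>2))"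
    unfolding D_def u_def[symmetric] v_def[symmetric] using pu pv
    by (simp add: field_simps power2_eq_square)
  have k: "\<bar>1 - u * v\<bar> \<le> (1+u\<^sup>2) * (1+v\<^sup>2)"
  proof -
    have "0 \<le> (\<bar>u\<bar> - \<bar>v\<bar>)\<^sup>2" by simp
    also have "\<dots> = u\<^sup>2 + v\<^sup>2 - 2 * \<bar>u * v\<bar>" by (simp add: power2_diff abs_mult)
    finally have "\<bar>u * v\<bar> \<le> u\<^sup>2 + v\<^sup>2" by (smt (verit) abs_ge_zero)
    moreover have "0 \<le> u\<^sup>2 * v\<^sup>2" by simp
    moreover have "\<bar>1 - u * v\<bar> \<le> 1 + \<bar>u * v\<bar>" by (rule order_trans[OF abs_triangle_ineq4]) simp
    moreover have "(1+u\<^sup>2) * (1+v\<^sup>2) = 1 + u\<^sup>2 + v\<^sup>2 + u\<^sup>2 * v\<^sup>2" by (simp add: algebra_simps)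
    ultimately show ?thesis by linarith
  qed
  have "\<bar>D x t - D x s\<bar> = \<bar>u - v\<bar> * (\<bar>1 - u * v\<bar> / ((1+u\<^sup>2) * (1+v\<^sup>2)))"
    using pu pv by (simp add: eq abs_mult abs_divide)
  also have "\<dots> \<le> \<bar>u - v\<bar> * 1"
    using k pu pv by (intro mult_left_mono) (auto simp: divide_le_eq)
  finally show ?thesis by (simp add: u_def v_def)
qed

lemma D_integrable:
  assumes "finite_measure N" "sets N = sets borel"
  shows "integrable N (\<lambda>x. D x t)"
proof -
  interpret finite_measure N by fact
  have m: "(\<lambda>x. D x t) \<in> borel_measurable N"
    using measurable_cong_sets[OF assms(2) refl] D_meas by blast
  show ?thesis
    by (rule integrable_const_bound[where B="1/2"]) (auto simp: D_bound' m)
qed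

lemma G_lip_gen:
  assumes "prob_space N" "sets N = sets borel"
  shows "\<bar>(\<integral>x. D x t \<partial>N) - (\<integral>x. D x s \<partial>N)\<bar> \<le> \<bar>t - s\<bar>"
proof -
  interpret prob_space N by fact
  have fm: "finite_measure N" by unfold_locales
  have "(\<integral>x. D x t \<partial>N) - (\<integral>x. D x s \<partial>N) = (\<integral>x. D x t - D x s \<partial>N)"
    by (rule Bochner_Integration.integral_diff[symmetric]) (auto intro: D_integrable[OF fm assms(2)])
  also have "\<bar>\<dots>\<bar> \<le> (\<integral>x. \<bar>D x t - D x s\<bar> \<partial>N)"
    by (rule integral_abs_bound)
  also have "\<dots> \<le> (\<integral>x. \<bar>t - s\<bar> \<partial>N)"
    by (intro integral_mono) (auto intro!: D_integrable[OF fm assms(2)] D_lip integrable_abs Bochner_Integration.integrable_diff)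
  also have "\<dots> = \<bar>t - s\<bar>" by (simp add: prob_space)
  finally show ?thesis .
qed

lemma G_bound_gen:
  assumes "prob_space N" "sets N = sets borel"
  shows "\<bar>(\<integral>x. D x t \<partial>N)\<bar> \<le> 1/2"
proof -
  interpret prob_space N by fact
  have fm: "finite_measure N" by unfold_locales
  have "\<bar>(\<integral>x. D x t \<partial>N)\<bar> \<le> (\<integral>x. \<bar>D x t\<bar> \<partial>N)"
    by (rule integral_abs_bound)
  also have "\<dots> \<le> (\<integral>x. 1/2 \<partial>N)"
    by (intro integral_mono) (auto intro: D_integrable[OF fm assms(2)] simp: D_bound')
  also have "\<dots> = 1/2" by (simp add: prob_space)
  finally show ?thesis .
qed

lemma D_n_lip: "\<bar>D_n X n t \<omega> - D_n X n s \<omega>\<bar> \<le> \<bar>t - s\<bar>"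
proof -
  have "D_n X n t \<omega> - D_n X n s \<omega> = (1 / real n) * (\<Sum>i=1..n. D (X i \<omega>) t - D (X i \<omega>) s)"
    unfolding D_n_def by (simp add: sum_subtractf algebra_simps)
  also have "\<bar>\<dots>\<bar> = (1 / real n) * \<bar>\<Sum>i=1..n. D (X i \<omega>) t - D (X i \<omega>) s\<bar>"
    by (simp add: abs_mult)
  also have "\<dots> \<le> (1 / real n) * (\<Sum>i=1..n. \<bar>t - s\<bar>)"
    by (intro mult_left_mono order_trans[OF sum_abs] sum_mono D_lip) auto
  also have "\<dots> \<le> \<bar>t - s\<bar>" by (cases "n = 0") auto
  finally show ?thesis .
qed

lemma D_n_bound: "\<bar>D_n X n t \<omega>\<bar> \<le> 1/2"
proof -
  have "\<bar>D_n X n t \<omega>\<bar> = (1 / real n) * \<bar>\<Sum>i=1..n. D (X i \<omega>) t\<bar>"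
    unfolding D_n_def by (simp add: abs_mult)
  also have "\<dots> \<le> (1 / real n) * (\<Sum>i=1..n. 1/2)"
    by (intro mult_left_mono order_trans[OF sum_abs] sum_mono D_bound) auto
  also have "\<dots> \<le> 1/2" by (cases "n = 0") auto
  finally show ?thesis .
qed

lemma iid_facts:
  assumes "iid_nu M m X"
  shows "prob_space M" "prob_space (nu_m m)" "sets (nu_m m) = sets borel"
    "\<And>i. i \<ge> 1 \<Longrightarrow> X i \<in> borel_measurable M"
    "\<And>i. i \<ge> 1 \<Longrightarrow> distr M borel (X i) = nu_m m"
    "prob_space.indep_vars M (\<lambda>_. borel) X {1..}"
proof -
  show "sets (nu_m m) = sets borel" by (simp add: nu_m_def)
  show "prob_space M" using assms unfolding iid_nu_def by auto
  show "\<And>i. i \<ge> 1 \<Longrightarrow> X i \<in> borel_measurable M"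
    "\<And>i. i \<ge> 1 \<Longrightarrow> distr M borel (X i) = nu_m m"
    "prob_space.indep_vars M (\<lambda>_. borel) X {1..}"
    using assms unfolding iid_nu_def by auto
  then show "prob_space (nu_m m)"
    by (metis le_refl prob_space.prob_space_distr \<open>prob_space M\<close>)
qed

lemma hoeff_point:
  assumes iid: "iid_nu M m X" and n: "n \<ge> 1" and r: "r \<ge> 0"
  shows "measure M {\<omega>\<in>space M. \<bar>D_n X n t \<omega> - G_m m t\<bar> \<ge> r} \<le> 2 * exp (-2 * real n * r\<^sup>2)"
proof -
  note f = iid_facts[OF iid]
  interpret prob_space M by (rule f(1))
  define Y where "Y = (\<lambda>i \<omega>. D (X i \<omega>) t)"
  have indY: "indep_vars (\<lambda>_. borel) Y {1..n}"
    unfolding Y_def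
    by (rule indep_vars_compose2[where X=X and M'="\<lambda>_. borel"])
       (auto intro: indep_vars_subset[OF f(6)])
  have EY: "expectation (Y i) = G_m m t" if "i \<in> {1..n}" for i
  proof -
    have i: "i \<ge> 1" using that by auto
    have "expectation (Y i) = (\<integral>x. D x t \<partial>distr M borel (X i))"
      unfolding Y_def by (rule integral_distr[symmetric]) (use f(4)[OF i] in auto)
    also have "\<dots> = G_m m t" unfolding f(5)[OF i] G_m_def ..
    finally show ?thesis .
  qed
  interpret H: Hoeffding_ineq M "{1..n}" Y "\<lambda>_. -1/2" "\<lambda>_. 1/2" "(\<Sum>i\<in>{1..n}. expectation (Y i))"
  proof unfold_locales
    show "indep_vars (\<lambda>_. borel) Y {1..n}" by (rule indY)
    fix i assume "i \<in> {1..n}"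
    show "AE x in M. Y i x \<in> {-1/2..1/2}"
      unfolding Y_def by (intro AE_I2 D_in)
  qed auto
  have mu: "(\<Sum>i\<in>{1..n}. expectation (Y i)) = real n * G_m m t"
    using EY by simp
  have "{\<omega>\<in>space M. \<bar>D_n X n t \<omega> - G_m m t\<bar> \<ge> r} =
        {\<omega>\<in>space M. \<bar>(\<Sum>i\<in>{1..n}. Y i \<omega>) - (\<Sum>i\<in>{1..n}. expectation (Y i))\<bar> \<ge> real n * r}"
  proof -
    have "\<bar>D_n X n t \<omega> - G_m m t\<bar> \<ge> r \<longleftrightarrow> \<bar>(\<Sum>i\<in>{1..n}. Y i \<omega>) - real n * G_m m t\<bar> \<ge> real n * r" for \<omega>
    proof -
      have np: "real n > 0" using n by simp
      have "(\<Sum>i\<in>{1..n}. Y i \<omega>) - real n * G_m m t = real n * (D_n X n t \<omega> - G_m m t)"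
        using np unfolding D_n_def Y_def by (simp add: field_simps)
      then show ?thesis using np by (simp add: abs_mult)
    qed
    then show ?thesis unfolding mu by auto
  qed
  also have "measure M \<dots> \<le> 2 * exp (-2 * (real n * r)\<^sup>2 / (\<Sum>i\<in>{1..n}. (1/2 - (-1/2::real))\<^sup>2))"
    by (rule H.Hoeffding_ineq_abs_ge) (use r n in auto)
  also have "\<dots> = 2 * exp (-2 * real n * r\<^sup>2)"
    using n by (simp add: power2_eq_square)
  finally show ?thesis .
qed

definition gridT :: "real \<Rightarrow> real set" where
  "gridT e = (\<lambda>k. -1 + real k * (e/4)) ` {0..nat \<lceil>8/e\<rceil>}"

lemma gridT_finite: "finite (gridT e)" and gridT_card: "card (gridT e) \<le> nat \<lceil>8/e\<rceil> + 1"
  unfolding gridT_def by (auto intro: order_trans[OF card_image_le])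

lemma grid_near:
  assumes e: "e > 0" and t: "t \<in> {-1..1}"
  shows "\<exists>s\<in>gridT e. \<bar>t - s\<bar> \<le> e/4"
proof -
  define d where "d = e/4"
  have d: "d > 0" using e by (simp add: d_def)
  define fl where "fl = \<lfloor>(t+1)/d\<rfloor>"
  have fl0: "fl \<ge> 0" using t d by (auto simp: fl_def)
  have fl1: "of_int fl \<le> (t+1)/d" "(t+1)/d < of_int fl + 1" unfolding fl_def by linarith+
  define k where "k = nat fl"
  have rk: "real k = of_int fl" using fl0 by (simp add: k_def)
  have "(t+1)/d \<le> 8/e" using t d e by (auto simp: d_def divide_simps)
  hence "of_int fl \<le> 8/e" using fl1 by linarith
  hence "fl \<le> \<lceil>8/e\<rceil>" by (meson ceiling_le_iff floor_le_ceiling le_floor_iff order_trans le_of_int_ceiling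
        of_int_le_iff)
  hence kk: "k \<in> {0..nat \<lceil>8/e\<rceil>}" unfolding k_def by auto
  have "real k * d \<le> t + 1" "t + 1 < real k * d + d"
    using fl1 d unfolding rk by (auto simp: field_simps)
  hence "\<bar>t - (-1 + real k * (e/4))\<bar> \<le> e/4" unfolding d_def by auto
  moreover have "-1 + real k * (e/4) \<in> gridT e" unfolding gridT_def using kk by auto
  ultimately show ?thesis by blast
qed

lemma D_n_meas:
  assumes "iid_nu M m X"
  shows "(\<lambda>\<omega>. D_n X n s \<omega>) \<in> borel_measurable M"
proof -
  note f = iid_facts[OF assms]
  have "(\<lambda>\<omega>. D (X i \<omega>) s) \<in> borel_measurable M" if "i \<in> {1..n}" for i
    using measurable_compose[OF f(4) D_meas] that by auto
  then show ?thesis unfolding D_n_def by (intro borel_measurable_times borel_measurable_const borel_measurable_sum) auto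
qed

lemma sup_facts:
  assumes "iid_nu M m X"
  shows "bdd_above ((\<lambda>t. \<bar>D_n X n t \<omega> - G_m m t\<bar>) ` {-1..1})"
    "(SUP t\<in>{-1..1}. \<bar>D_n X n t \<omega> - G_m m t\<bar>) \<ge> 0"
proof -
  note f = iid_facts[OF assms]
  have b: "\<bar>D_n X n t \<omega> - G_m m t\<bar> \<le> 1" for t
  proof -
    have "\<bar>G_m m t\<bar> \<le> 1/2" unfolding G_m_def by (rule G_bound_gen[OF f(2) f(3)])
    thus ?thesis using D_n_bound[of X n t \<omega>] by linarith
  qed
  show bd: "bdd_above ((\<lambda>t. \<bar>D_n X n t \<omega> - G_m m t\<bar>) ` {-1..1})"
    by (rule bdd_aboveI2[where M=1]) (rule b)
  show "(SUP t\<in>{-1..1}. \<bar>D_n X n t \<omega> - G_m m t\<bar>) \<ge> 0"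
    by (rule cSUP_upper2[OF bd, of 0]) auto
qed

lemma sup_imp:
  assumes iid: "iid_nu M m X" and e: "e > 0"
    and gt: "(SUP t\<in>{-1..1}. \<bar>D_n X n t \<omega> - G_m m t\<bar>) > e"
  shows "\<exists>s\<in>gridT e. \<bar>D_n X n s \<omega> - G_m m s\<bar> \<ge> e/2"
proof -
  note f = iid_facts[OF iid]
  obtain t where t: "t \<in> {-1..1}" "\<bar>D_n X n t \<omega> - G_m m t\<bar> > e"
    using gt less_cSUP_iff[OF _ sup_facts(1)[OF iid]] by force
  obtain s where s: "s \<in> gridT e" "\<bar>t - s\<bar> \<le> e/4" using grid_near[OF e t(1)] by blast
  have "\<bar>G_m m t - G_m m s\<bar> \<le> \<bar>t - s\<bar>" unfolding G_m_def by (rule G_lip_gen[OF f(2) f(3)])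
  moreover have "\<bar>D_n X n t \<omega> - D_n X n s \<omega>\<bar> \<le> \<bar>t - s\<bar>" by (rule D_n_lip)
  ultimately have "\<bar>D_n X n s \<omega> - G_m m s\<bar> \<ge> e/2" using t(2) s(2) by linarith
  then show ?thesis using s(1) by blast
qed

lemma event_bound:
  assumes iid: "iid_nu M m X" and e: "e > 0" and n: "n \<ge> 1"
  shows "measure M (\<Union>s\<in>gridT e. {\<omega>\<in>space M. \<bar>D_n X n s \<omega> - G_m m s\<bar> \<ge> e/2})
          \<le> (2 * (real (nat \<lceil>8/e\<rceil>) + 1)) * exp (-(e\<^sup>2 / 2) * real n)"
proof -
  note f = iid_facts[OF iid]
  interpret prob_space M by (rule f(1))
  have meas: "{\<omega>\<in>space M. \<bar>D_n X n s \<omega> - G_m m s\<bar> \<ge> e/2} \<in> sets M" for s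
  proof -
    have [measurable]: "(\<lambda>\<omega>. D_n X n s \<omega>) \<in> borel_measurable M" by (rule D_n_meas[OF iid])
    show ?thesis by measurable
  qed
  have "measure M (\<Union>s\<in>gridT e. {\<omega>\<in>space M. \<bar>D_n X n s \<omega> - G_m m s\<bar> \<ge> e/2})
        \<le> (\<Sum>s\<in>gridT e. measure M {\<omega>\<in>space M. \<bar>D_n X n s \<omega> - G_m m s\<bar> \<ge> e/2})"
    by (rule measure_UNION_le[OF gridT_finite meas])
  also have "\<dots> \<le> (\<Sum>s\<in>gridT e. 2 * exp (-2 * real n * (e/2)\<^sup>2))"
    by (intro sum_mono hoeff_point[OF iid n]) (use e in auto)
  also have "\<dots> = real (card (gridT e)) * (2 * exp (-(e\<^sup>2 / 2) * real n))"
    by (simp add: power2_eq_square field_simps)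
  also have "\<dots> \<le> (real (nat \<lceil>8/e\<rceil>) + 1) * (2 * exp (-(e\<^sup>2 / 2) * real n))"
    using gridT_card[of e] by (intro mult_right_mono) auto
  finally show ?thesis by (simp add: algebra_simps)
qed

lemma union_meas:
  assumes iid: "iid_nu M m X"
  shows "(\<Union>s\<in>gridT e. {\<omega>\<in>space M. \<bar>D_n X n s \<omega> - G_m m s\<bar> \<ge> e/2}) \<in> sets M"
proof -
  have "{\<omega>\<in>space M. \<bar>D_n X n s \<omega> - G_m m s\<bar> \<ge> e/2} \<in> sets M" for s
  proof -
    have [measurable]: "(\<lambda>\<omega>. D_n X n s \<omega>) \<in> borel_measurable M" by (rule D_n_meas[OF iid])
    show ?thesis by measurable
  qed
  then show ?thesis using gridT_finite by (intro sets.finite_UN) auto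
qed

lemma part1:
  assumes iid: "iid_nu M m X" and e: "e > 0" and n: "n \<ge> 1"
  shows "measure M {\<omega>\<in>space M. (SUP t\<in>{-1..1}. \<bar>D_n X n t \<omega> - G_m m t\<bar>) > e}
          \<le> (2 * (real (nat \<lceil>8/e\<rceil>) + 1)) * exp (-(e\<^sup>2 / 2) * real n)"
proof -
  note f = iid_facts[OF iid]
  interpret prob_space M by (rule f(1))
  have "measure M {\<omega>\<in>space M. (SUP t\<in>{-1..1}. \<bar>D_n X n t \<omega> - G_m m t\<bar>) > e}
      \<le> measure M (\<Union>s\<in>gridT e. {\<omega>\<in>space M. \<bar>D_n X n s \<omega> - G_m m s\<bar> \<ge> e/2})"
    by (rule finite_measure_mono[OF _ union_meas[OF iid]]) (use sup_imp[OF iid e] in blast)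
  also have "\<dots> \<le> (2 * (real (nat \<lceil>8/e\<rceil>) + 1)) * exp (-(e\<^sup>2 / 2) * real n)"
    by (rule event_bound[OF iid e n])
  finally show ?thesis .
qed

lemma part2:
  assumes iid: "iid_nu M m X"
  shows "AE \<omega> in M. (\<lambda>n. SUP t\<in>{-1..1}. \<bar>D_n X n t \<omega> - G_m m t\<bar>) \<longlonglongrightarrow> 0"
proof -
  note f = iid_facts[OF iid]
  interpret prob_space M by (rule f(1))
  define A where "A = (\<lambda>(k::nat) n. \<Union>s\<in>gridT (1/Suc k). {\<omega>\<in>space M. \<bar>D_n X n s \<omega> - G_m m s\<bar> \<ge> (1/Suc k)/2})"
  have ev: "AE \<omega> in M. eventually (\<lambda>n. \<omega> \<in> space M - A k n) sequentially" for k
  proof (rule borel_cantelli_AE1)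
    show "A k n \<in> sets M" for n unfolding A_def by (rule union_meas[OF iid])
    show "emeasure M (A k n) < \<infinity>" for n unfolding infinity_ennreal_def by (rule top.not_eq_extremum[THEN iffD1]) (rule emeasure_finite)
    define e where "e = 1 / real (Suc k)"
    have e: "e > 0" by (simp add: e_def)
    define c where "c = 2 * (real (nat \<lceil>8/e\<rceil>) + 1)"
    have "summable (\<lambda>n. c * exp (-(e\<^sup>2 / 2)) ^ n)"
      using e by (intro summable_mult summable_geometric) auto
    moreover have "norm (measure M (A k n)) \<le> c * exp (-(e\<^sup>2 / 2)) ^ n" if n: "n \<ge> 1" for n
    proof -
      have "measure M (A k n) \<le> c * exp (-(e\<^sup>2 / 2) * real n)"
        unfolding A_def c_def e_def[symmetric] by (rule event_bound[OF iid e n])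
      also have "exp (-(e\<^sup>2 / 2) * real n) = exp (-(e\<^sup>2 / 2)) ^ n"
        by (simp add: exp_of_nat_mult[symmetric] mult.commute)
      finally show "norm (measure M (A k n)) \<le> c * exp (-(e\<^sup>2 / 2)) ^ n" by simp
    qed
    ultimately show "summable (\<lambda>n. measure M (A k n))"
      by (rule summable_comparison_test'[where N=1])
  qed
  then have "AE \<omega> in M. \<forall>k. eventually (\<lambda>n. \<omega> \<in> space M - A k n) sequentially"
    by (simp add: AE_all_countable)
  with AE_space show ?thesis
  proof eventually_elim
    case (elim \<omega>)
    have \<omega>: "\<omega> \<in> space M" and H: "\<forall>k. eventually (\<lambda>n. \<omega> \<in> space M - A k n) sequentially"
      using elim by auto
    define S where "S = (\<lambda>n. SUP t\<in>{-1..1}. \<bar>D_n X n t \<omega> - G_m m t\<bar>)"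
    have S0: "S n \<ge> 0" for n unfolding S_def by (rule sup_facts(2)[OF iid])
    have "S \<longlonglongrightarrow> 0"
    proof (rule order_tendstoI)
      fix a :: real assume "a < 0"
      show "eventually (\<lambda>n. a < S n) sequentially"
      proof (rule always_eventually, rule allI)
        fix n show "a < S n" using S0[of n] \<open>a < 0\<close> by linarith
      qed
    next
      fix a :: real assume a: "a > 0"
      obtain k where k: "inverse (real (Suc k)) < a" using reals_Archimedean[OF a] by blast
      show "eventually (\<lambda>n. S n < a) sequentially"
        using H[rule_format, of k]
      proof eventually_elim
        case (elim n)
        have "\<not> S n > 1 / real (Suc k)"
        proof
          assume gt: "S n > 1 / real (Suc k)"
          have pos: "1 / real (Suc k) > 0" by simp
          obtain s where "s \<in> gridT (1/Suc k)" "\<bar>D_n X n s \<omega> - G_m m s\<bar> \<ge> (1/Suc k)/2"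
            using sup_imp[OF iid pos gt[unfolded S_def]] by blast
          then have "\<omega> \<in> A k n" unfolding A_def using \<omega> by blast
          then show False using elim by blast
        qed
        then show ?case using k by (simp add: inverse_eq_divide)
      qed
    qed
    then show "(\<lambda>n. SUP t\<in>{-1..1}. \<bar>D_n X n t \<omega> - G_m m t\<bar>) \<longlonglongrightarrow> 0" unfolding S_def .
  qed
qed

theorem lemma3p1:
  shows "(\<forall>\<epsilon>>0. \<exists>c>0. \<forall>m::real. \<forall>(M::'a measure) X. m > 1/2 \<longrightarrow> iid_nu M m X \<longrightarrow>
            (\<forall>n::nat\<ge>1. measure M {\<omega>\<in>space M. (SUP t\<in>{-1..1}. \<bar>D_n X n t \<omega> - G_m m t\<bar>) > \<epsilon>}
                \<le> c * exp (-(\<epsilon>\<^sup>2 / 2) * real n)))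
     \<and> (\<forall>m::real. \<forall>(M::'a measure) X. m > 1/2 \<longrightarrow> iid_nu M m X \<longrightarrow>
            (AE \<omega> in M. (\<lambda>n. SUP t\<in>{-1..1}. \<bar>D_n X n t \<omega> - G_m m t\<bar>) \<longlonglongrightarrow> 0))"
proof (intro conjI allI impI)
  fix e :: real assume e: "e > 0"
  show "\<exists>c>0. \<forall>m::real. \<forall>(M::'a measure) X. m > 1/2 \<longrightarrow> iid_nu M m X \<longrightarrow>
            (\<forall>n::nat\<ge>1. measure M {\<omega>\<in>space M. (SUP t\<in>{-1..1}. \<bar>D_n X n t \<omega> - G_m m t\<bar>) > e}
                \<le> c * exp (-(e\<^sup>2 / 2) * real n))"
  proof (intro exI[where x="2 * (real (nat \<lceil>8/e\<rceil>) + 1)"] conjI allI impI)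
    show "0 < 2 * (real (nat \<lceil>8/e\<rceil>) + 1)" by simp
  next
    fix m :: real and M :: "'a measure" and X and n :: nat
    assume "m > 1/2" "iid_nu M m X" "n \<ge> 1"
    from part1[OF \<open>iid_nu M m X\<close> e \<open>n \<ge> 1\<close>]
    show "measure M {\<omega>\<in>space M. (SUP t\<in>{-1..1}. \<bar>D_n X n t \<omega> - G_m m t\<bar>) > e}
                \<le> 2 * (real (nat \<lceil>8/e\<rceil>) + 1) * exp (-(e\<^sup>2 / 2) * real n)" .
  qed
next
  fix m :: real and M :: "'a measure" and X
  assume "iid_nu M m X"
  then show "AE \<omega> in M. (\<lambda>n. SUP t\<in>{-1..1}. \<bar>D_n X n t \<omega> - G_m m t\<bar>) \<longlonglongrightarrow> 0"
    by (rule part2)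
qed

end
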